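(* In the personalized Bayesian linear regression model with DP described in the context, suppose $\mathbf{X}_n^{\intercal}\mathbf{X}_n=\rho\mathbf{I}_d$ for all $n$, with $\rho>0$. Then the DP-perturbed optimal personalized model is $$\tilde{\boldsymbol{\varpi}}_n^{\ast}(\lambda)=\frac{b}{(2-\lambda)\rho+b\lambda}\Big(\Big(\frac{(2-\lambda)\rho}{b}+\frac{\lambda}{N}\Big)\hat{\boldsymbol{u}}_n+\frac{\lambda}{N}\sum_{m\ne n}\hat{\boldsymbol{u}}_m+\frac{\lambda}{N}\sum_{m=1}^N\mathbf{z}_m\Big),$$ and, conditionally on the estimates $\hat{\boldsymbol{u}}_1,\dots,\hat{\boldsymbol{u}}_N$, the optimal local model satisfies $$\boldsymbol{u}_n^{\ast}=\frac{\sigma_w^2\rho}{\sigma^2}\hat{\boldsymbol{u}}_n+\frac{\sigma_w^2\rho}{\sigma^2+N\zeta^2\rho}\sum_{m\ne n}\hat{\boldsymbol{u}}_m+\boldsymbol{\vartheta}_n,$$ where $\boldsymbol{\vartheta}_n\sim\mathcal{N}(0,\sigma_w^2\mathbf{I}_d)$ and $\sigma_w^2=\Big(\frac{N-1}{\sigma^2/\rho+N\zeta^2}+\frac{\rho}{\sigma^2}\Big)^{-1}$.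
   Context: Model: $N$ clients, each with $b$ samples $\mathbf{X}_n\in\mathbb{R}^{b\times d}$, $\mathbf{Y}_n\in\mathbb{R}^b$. The optimal global model $\boldsymbol{\omega}^{\ast}$ has the non-informative (uniform) prior on $\mathbb{R}^d$; $\boldsymbol{u}_n^{\ast}=\boldsymbol{\omega}^{\ast}+\boldsymbol{\tau}_n$ with $\boldsymbol{\tau}_n\sim\mathcal{N}(0,\zeta^2\mathbf{I}_d)$ i.i.d.; $\mathbf{Y}_n=\mathbf{X}_n\boldsymbol{u}_n^{\ast}+\boldsymbol{\nu}_n$ with $\boldsymbol{\nu}_n\sim\mathcal{N}(0,\sigma^2\mathbf{I}_b)$. Local loss $F_n(\boldsymbol{u})=\frac1b\|\mathbf{X}_n\boldsymbol{u}-\mathbf{Y}_n\|^2$; local estimate $\hat{\boldsymbol{u}}_n=(\mathbf{X}_n^{\intercal}\mathbf{X}_n)^{-1}\mathbf{X}_n^{\intercal}\mathbf{Y}_n$. With DP, the server receives $\tilde{\boldsymbol{u}}_n=\hat{\boldsymbol{u}}_n+\mathbf{z}_n$, $\mathbf{z}_n\sim\mathcal{N}(0,\sigma_u^2\mathbf{I}_d)$ i.i.d., and forms $\tilde{\boldsymbol{\omega}}^{\ast}=\sum_{n=1}^N(\mathbf{X}^{\intercal}\mathbf{X})^{-1}\mathbf{X}_n^{\intercal}\mathbf{X}_n\tilde{\boldsymbol{u}}_n$, where $\mathbf{X}=(\mathbf{X}_1^{\top}\cdots\mathbf{X}_N^{\top})^{\top}$. For $\lambda\in[0,2]$, $\tilde{\boldsymbol{\varpi}}_n^{\ast}(\lambda)=\arg\min_{\boldsymbol{\varpi}}\big[(1-\frac{\lambda}{2})F_n(\boldsymbol{\varpi})+\frac{\lambda}{2}\|\boldsymbol{\varpi}-\tilde{\boldsymbol{\omega}}^{\ast}\|^2\big]$.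 *)

theory Defs
  imports "HOL-Probability.Probability"
begin

text \<open>Clients are indexed by a finite type 'c (N = CARD('c)), samples per client by a
finite type 'b (b = CARD('b)), model coordinates by a finite type 'd (d = CARD('d)).
A local design matrix X_n is a b x d matrix of type real^'d^'b.\<close>

definition num_clients :: "'c::finite itself \<Rightarrow> real" where
  "num_clients _ = real CARD('c)"

definition num_samples :: "'b::finite itself \<Rightarrow> real" where
  "num_samples _ = real CARD('b)"

definition local_est :: "real^'d^'b \<Rightarrow> real^'b \<Rightarrow> real^'d" where
  "local_est Xn Yn = matrix_inv (transpose Xn ** Xn) *v (transpose Xn *v Yn)"

definition stack_design :: "('c::finite \<Rightarrow> real^'d^'b::finite) \<Rightarrow> real^'d^('c \<times> 'b)" where
  "stack_design X = (\<chi> p. X (fst p) $ snd p)"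

definition global_dp ::
  "('c::finite \<Rightarrow> real^'d^'b::finite) \<Rightarrow> ('c \<Rightarrow> real^'b) \<Rightarrow> ('c \<Rightarrow> real^'d) \<Rightarrow> real^'d" where
  "global_dp X Y z =
     (\<Sum>m\<in>UNIV. matrix_inv (transpose (stack_design X) ** stack_design X)
                 *v ((transpose (X m) ** X m) *v (local_est (X m) (Y m) + z m)))"

definition local_loss :: "real^'d^'b::finite \<Rightarrow> real^'b \<Rightarrow> real^'d \<Rightarrow> real" where
  "local_loss Xn Yn u = (1 / num_samples TYPE('b)) * (norm (Xn *v u - Yn))\<^sup>2"

definition pers_obj ::
  "('c::finite \<Rightarrow> real^'d^'b::finite) \<Rightarrow> ('c \<Rightarrow> real^'b) \<Rightarrow> ('c \<Rightarrow> real^'d)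
     \<Rightarrow> real \<Rightarrow> 'c \<Rightarrow> real^'d \<Rightarrow> real" where
  "pers_obj X Y z lam n w =
     (1 - lam / 2) * local_loss (X n) (Y n) w + (lam / 2) * (norm (w - global_dp X Y z))\<^sup>2"

text \<open>Density of N(mu, s^2 I) on real^'d (s is the standard deviation).\<close>
definition gauss_vec_density :: "real^'k::finite \<Rightarrow> real \<Rightarrow> real^'k \<Rightarrow> real" where
  "gauss_vec_density mu s x = (\<Prod>i\<in>UNIV. normal_density (mu $ i) s (x $ i))"

text \<open>Joint (improper, uniform prior on omega) density of (omega, u_1..u_N, Y_1..Y_N):
  u_m | omega ~ N(omega, zeta^2 I_d), Y_m | u_m ~ N(X_m u_m, sig^2 I_b), independently.\<close>
definition joint_density ::
  "real \<Rightarrow> real \<Rightarrow> ('c::finite \<Rightarrow> real^'d^'b::finite) \<Rightarrow> ('c \<Rightarrow> real^'b)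
     \<Rightarrow> real^'d \<Rightarrow> real^'d^'c \<Rightarrow> real" where
  "joint_density zeta sig X Y omega u =
     (\<Prod>m\<in>UNIV. gauss_vec_density omega zeta (u $ m) * gauss_vec_density (X m *v (u $ m)) sig (Y m))"

text \<open>Unnormalised posterior mass of the event u_n in A given the data (Lebesgue measure on
omega = non-informative prior; integrate out all latent variables).\<close>
definition post_mass ::
  "real \<Rightarrow> real \<Rightarrow> ('c::finite \<Rightarrow> real^'d^'b::finite) \<Rightarrow> ('c \<Rightarrow> real^'b)
     \<Rightarrow> 'c \<Rightarrow> (real^'d) set \<Rightarrow> ennreal" where
  "post_mass zeta sig X Y n A =
     (\<integral>\<^sup>+ omega. (\<integral>\<^sup>+ u. indicator A (u $ n) * ennreal (joint_density zeta sig X Y omega u) \<partial>lborel) \<partial>lborel)"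

definition post_prob ::
  "real \<Rightarrow> real \<Rightarrow> ('c::finite \<Rightarrow> real^'d^'b::finite) \<Rightarrow> ('c \<Rightarrow> real^'b)
     \<Rightarrow> 'c \<Rightarrow> (real^'d) set \<Rightarrow> ennreal" where
  "post_prob zeta sig X Y n A = post_mass zeta sig X Y n A / post_mass zeta sig X Y n UNIV"

end

theory Submission
  imports Defs
begin

lemma vec_lambda_measurable[measurable]:
  "(\<lambda>f. vec_lambda f :: 'a::euclidean_space^'n::finite) \<in> (PiM UNIV (\<lambda>_. borel)) \<rightarrow>\<^sub>M borel"
proof -
  have "\<forall>i\<in>Basis. (\<lambda>f. (vec_lambda f :: 'a^'n) \<bullet> i) \<in> borel_measurable (PiM UNIV (\<lambda>_. borel))"
  proof
    fix i :: "'a^'n" assume "i \<in> Basis"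
    then obtain j u where ju: "u \<in> Basis" "i = axis j u" unfolding Basis_vec_def by auto
    have "(\<lambda>f. (vec_lambda f :: 'a^'n) \<bullet> i) = (\<lambda>f. f j \<bullet> u)"
      using ju by (auto simp: inner_axis)
    then show "(\<lambda>f. (vec_lambda f :: 'a^'n) \<bullet> i) \<in> borel_measurable (PiM UNIV (\<lambda>_. borel))"
      by simp
  qed
  then show ?thesis by (subst borel_measurable_euclidean_space) auto
qed

lemma lborel_vec:
  "(lborel :: ('a::euclidean_space^'n::finite) measure) = distr (PiM UNIV (\<lambda>_. lborel)) borel vec_lambda"
proof (rule lborel_eqI)
  interpret P: finite_product_sigma_finite "\<lambda>_. lborel :: 'a measure" "UNIV :: 'n set"
    by standard auto
  fix l u :: "'a^'n"
  assume le: "\<And>b. b \<in> Basis \<Longrightarrow> l \<bullet> b \<le> u \<bullet> b"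
  have le': "\<And>j b. b \<in> Basis \<Longrightarrow> (l$j) \<bullet> b \<le> (u$j) \<bullet> b"
    using le by (metis (no_types, lifting) Basis_vec_def UN_iff inner_axis singletonI UNIV_I)
  have meas: "vec_lambda \<in> PiM UNIV (\<lambda>_. lborel :: 'a measure) \<rightarrow>\<^sub>M borel"
    using vec_lambda_measurable by (simp cong: measurable_cong_sets)
  have pre: "vec_lambda -` box l u \<inter> space (PiM UNIV (\<lambda>_. lborel :: 'a measure)) = PiE UNIV (\<lambda>j. box (l$j) (u$j))"
    by (auto simp: mem_box Basis_vec_def inner_axis space_PiM PiE_def Pi_def extensional_def)
  have "emeasure (distr (PiM UNIV (\<lambda>_. lborel)) borel vec_lambda) (box l u)
      = emeasure (PiM UNIV (\<lambda>_. lborel :: 'a measure)) (PiE UNIV (\<lambda>j. box (l$j) (u$j)))"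
    by (subst emeasure_distr[OF meas]) (auto simp: pre)
  also have "\<dots> = (\<Prod>j\<in>UNIV. emeasure lborel (box (l$j) (u$j)))"
    by (rule P.emeasure_PiM) auto
  also have "\<dots> = (\<Prod>j\<in>UNIV. ennreal (\<Prod>b\<in>Basis. (u$j - l$j) \<bullet> b))"
    using le' by (subst emeasure_lborel_box) auto
  also have "\<dots> = ennreal (\<Prod>j\<in>UNIV. \<Prod>b\<in>Basis. (u$j - l$j) \<bullet> b)"
    by (rule prod_ennreal) (auto intro!: prod_nonneg simp: inner_diff_left le')
  also have "(\<Prod>j\<in>UNIV. \<Prod>b\<in>Basis. (u$j - l$j) \<bullet> b) = (\<Prod>b\<in>Basis. (u - l) \<bullet> b)"
  proof -
    have "(\<Prod>b\<in>(Basis::('a^'n) set). (u - l) \<bullet> b) = (\<Prod>j\<in>UNIV. \<Prod>b\<in>(\<Union>v\<in>(Basis::'a set). {axis j v}). (u - l) \<bullet> b)"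
      unfolding Basis_vec_def
      by (rule prod.UNION_disjoint) (auto simp: axis_eq_axis)
    also have "\<dots> = (\<Prod>j\<in>UNIV. \<Prod>v\<in>Basis. (u$j - l$j) \<bullet> v)"
    proof (rule prod.cong[OF refl])
      fix j :: 'n
      have "(\<Union>v\<in>(Basis::'a set). {axis j v}) = axis j ` (Basis :: 'a set)" by auto
      then show "(\<Prod>b\<in>(\<Union>v\<in>(Basis::'a set). {axis j v}). (u - l) \<bullet> b) = (\<Prod>v\<in>Basis. (u$j - l$j) \<bullet> v)"
        by (simp add: prod.reindex inj_on_def axis_eq_axis inner_axis nonzero_Basis)
    qed
    finally show ?thesis by simp
  qed
  finally show "emeasure (distr (PiM UNIV (\<lambda>_. lborel)) borel vec_lambda) (box l u) = (\<Prod>b\<in>Basis. (u - l) \<bullet> b)" .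
qed simp


lemma vec_nth_borel[measurable]: "(\<lambda>x::('a::euclidean_space)^'n::finite. x $ i) \<in> borel_measurable borel"
  by (rule borel_measurable_continuous_onI) (simp add: bounded_linear_vec_nth linear_continuous_on)

lemma vec_nth_borel_raw[measurable (raw)]:
  "f \<in> borel_measurable M \<Longrightarrow> (\<lambda>x. (f x :: ('a::euclidean_space)^'n::finite) $ i) \<in> borel_measurable M"
  using measurable_compose[OF _ vec_nth_borel] by blast

lemma nn_integral_vec_prod:
  fixes f :: "'n::finite \<Rightarrow> 'a::euclidean_space \<Rightarrow> ennreal"
  assumes [measurable]: "\<And>m. f m \<in> borel_measurable borel"
  shows "(\<integral>\<^sup>+ u. (\<Prod>m\<in>UNIV. f m (u$m)) \<partial>(lborel::('a^'n) measure)) = (\<Prod>m\<in>UNIV. \<integral>\<^sup>+ v. f m v \<partial>lborel)"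
proof -
  interpret P: product_sigma_finite "\<lambda>_. lborel :: 'a measure"
    by standard
  have meas: "vec_lambda \<in> PiM UNIV (\<lambda>_. lborel :: 'a measure) \<rightarrow>\<^sub>M (borel :: ('a^'n) measure)"
    using vec_lambda_measurable by (simp cong: measurable_cong_sets)
  have "(\<integral>\<^sup>+ u. (\<Prod>m\<in>UNIV. f m (u$m)) \<partial>(lborel::('a^'n) measure))
     = (\<integral>\<^sup>+ u. (\<Prod>m\<in>UNIV. f m (u$m)) \<partial>distr (PiM UNIV (\<lambda>_. lborel)) borel vec_lambda)"
    by (subst lborel_vec) simp
  also have "\<dots> = (\<integral>\<^sup>+ g. (\<Prod>m\<in>UNIV. f m (g m)) \<partial>PiM UNIV (\<lambda>_. lborel :: 'a measure))"
    by (subst nn_integral_distr[OF meas]) auto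
  also have "\<dots> = (\<Prod>m\<in>UNIV. \<integral>\<^sup>+ v. f m v \<partial>lborel)"
    by (rule P.product_nn_integral_prod) auto
  finally show ?thesis .
qed

lemma gauss_vec_meas[measurable (raw)]:
  assumes [measurable]: "f \<in> borel_measurable M" "g \<in> borel_measurable M"
  shows "(\<lambda>x. gauss_vec_density (f x :: real^'k::finite) s (g x)) \<in> borel_measurable M"
  unfolding gauss_vec_density_def normal_density_def by measurable

lemma gauss_vec_nonneg[simp]: "0 \<le> gauss_vec_density mu s x"
  unfolding gauss_vec_density_def by (simp add: prod_nonneg)

lemma gauss_vec_pos: "s > 0 \<Longrightarrow> 0 < gauss_vec_density mu s x"
  unfolding gauss_vec_density_def by (simp add: prod_pos normal_density_pos)

lemma gauss_vec_sym: "gauss_vec_density mu s x = gauss_vec_density x s mu"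
  unfolding gauss_vec_density_def normal_density_def
  by (intro prod.cong refl) (simp add: power2_commute)

lemma nn_integral_normal_density: "s > 0 \<Longrightarrow> (\<integral>\<^sup>+ x. ennreal (normal_density mu s x) \<partial>lborel) = 1"
  by (subst nn_integral_eq_integral) (auto simp: integrable_normal_density integral_normal_density)

lemma gauss_vec_integral:
  assumes "s > 0"
  shows "(\<integral>\<^sup>+ x. ennreal (gauss_vec_density (mu::real^'k::finite) s x) \<partial>lborel) = 1"
proof -
  have "(\<lambda>x. ennreal (gauss_vec_density mu s x)) = (\<lambda>x. \<Prod>i\<in>UNIV. ennreal (normal_density (mu$i) s (x$i)))"
    unfolding gauss_vec_density_def by (subst prod_ennreal) auto
  then have "(\<integral>\<^sup>+ x. ennreal (gauss_vec_density mu s x) \<partial>lborel) = (\<integral>\<^sup>+ x. (\<Prod>i\<in>UNIV. ennreal (normal_density (mu$i) s (x$i))) \<partial>lborel)" by simp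
  also have "(\<integral>\<^sup>+ x. (\<Prod>i\<in>UNIV. ennreal (normal_density (mu$i) s (x$i))) \<partial>lborel) = (\<Prod>i\<in>(UNIV::'k set). 1)"
    by (subst nn_integral_vec_prod) (auto simp: nn_integral_normal_density assms)
  finally show ?thesis by simp
qed

lemma gauss_vec_closed:
  fixes mu :: "real^'k::finite"
  shows "gauss_vec_density mu s x = (1 / sqrt (2 * pi * s\<^sup>2)) ^ CARD('k) * exp (- (norm (x - mu))\<^sup>2 / (2 * s\<^sup>2))"
proof -
  have n: "(norm (x - mu))\<^sup>2 = (\<Sum>i\<in>UNIV. (x$i - mu$i)\<^sup>2)"
    unfolding norm_vec_def L2_set_def by (simp add: sum_nonneg)
  show ?thesis
    unfolding gauss_vec_density_def normal_density_def prod.distrib n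
    by (simp add: exp_sum[symmetric] sum_divide_distrib sum_negf)
qed


lemma nd_mult:
  fixes a b x s t :: real
  assumes s: "s > 0" and t: "t > 0"
  shows "normal_density a s x * normal_density b t x =
    normal_density b (sqrt (s\<^sup>2 + t\<^sup>2)) a * normal_density ((t\<^sup>2 * a + s\<^sup>2 * b) / (s\<^sup>2 + t\<^sup>2)) (s * t / sqrt (s\<^sup>2 + t\<^sup>2)) x"
proof -
  define q where "q = s\<^sup>2 + t\<^sup>2"
  have q: "q > 0" using s t by (simp add: q_def add_pos_pos)
  have sq: "(sqrt q)\<^sup>2 = q" using q by simp
  have r2: "(s * t / sqrt q)\<^sup>2 = s\<^sup>2 * t\<^sup>2 / q" using q by (simp add: power_divide power_mult_distrib)
  have c1: "1 / sqrt (2 * pi * s\<^sup>2) * (1 / sqrt (2 * pi * t\<^sup>2)) = 1 / sqrt (2 * pi * q) * (1 / sqrt (2 * pi * (s\<^sup>2 * t\<^sup>2 / q)))"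
  proof -
    have "sqrt (2 * pi * s\<^sup>2) * sqrt (2 * pi * t\<^sup>2) = sqrt (2 * pi * q) * sqrt (2 * pi * (s\<^sup>2 * t\<^sup>2 / q))"
      unfolding real_sqrt_mult[symmetric] using q by (simp add: field_simps)
    then show ?thesis by (simp add: divide_simps)
  qed
  have P: "q * t\<^sup>2 * (x - a)\<^sup>2 + q * s\<^sup>2 * (x - b)\<^sup>2 = s\<^sup>2 * t\<^sup>2 * (a - b)\<^sup>2 + (q * x - t\<^sup>2 * a - s\<^sup>2 * b)\<^sup>2"
    unfolding q_def power2_eq_square by algebra
  have L: "-(x - a)\<^sup>2 / (2 * s\<^sup>2) + -(x - b)\<^sup>2 / (2 * t\<^sup>2) = - (q * t\<^sup>2 * (x - a)\<^sup>2 + q * s\<^sup>2 * (x - b)\<^sup>2) / (2 * q * s\<^sup>2 * t\<^sup>2)"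
    using s t q by (simp add: field_simps)
  have R: "-(a - b)\<^sup>2 / (2 * q) + -(x - (t\<^sup>2 * a + s\<^sup>2 * b) / q)\<^sup>2 / (2 * (s\<^sup>2 * t\<^sup>2 / q)) = - (s\<^sup>2 * t\<^sup>2 * (a - b)\<^sup>2 + (q * x - t\<^sup>2 * a - s\<^sup>2 * b)\<^sup>2) / (2 * q * s\<^sup>2 * t\<^sup>2)"
  proof -
    have "x - (t\<^sup>2 * a + s\<^sup>2 * b) / q = (q * x - t\<^sup>2 * a - s\<^sup>2 * b) / q" using q by (simp add: field_simps)
    then show ?thesis using s t q by (simp add: field_simps power_divide power2_eq_square)
  qed
  have e: "-(x - a)\<^sup>2 / (2 * s\<^sup>2) + -(x - b)\<^sup>2 / (2 * t\<^sup>2) =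
           -(a - b)\<^sup>2 / (2 * q) + -(x - (t\<^sup>2 * a + s\<^sup>2 * b) / q)\<^sup>2 / (2 * (s\<^sup>2 * t\<^sup>2 / q))"
    unfolding L R P ..
  show ?thesis
    unfolding normal_density_def q_def[symmetric] sq r2
    using c1 e by (simp add: exp_add[symmetric] ac_simps)
qed

lemma gv_mult:
  fixes a b x :: "real^'k::finite"
  assumes s: "s > 0" and t: "t > 0"
  shows "gauss_vec_density a s x * gauss_vec_density b t x =
    gauss_vec_density b (sqrt (s\<^sup>2 + t\<^sup>2)) a *
    gauss_vec_density ((t\<^sup>2 / (s\<^sup>2 + t\<^sup>2)) *\<^sub>R a + (s\<^sup>2 / (s\<^sup>2 + t\<^sup>2)) *\<^sub>R b) (s * t / sqrt (s\<^sup>2 + t\<^sup>2)) x"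
  unfolding gauss_vec_density_def prod.distrib[symmetric]
proof (rule prod.cong[OF refl])
  fix i
  show "normal_density (a $ i) s (x $ i) * normal_density (b $ i) t (x $ i) =
    normal_density (b $ i) (sqrt (s\<^sup>2 + t\<^sup>2)) (a $ i) *
    normal_density (((t\<^sup>2 / (s\<^sup>2 + t\<^sup>2)) *\<^sub>R a + (s\<^sup>2 / (s\<^sup>2 + t\<^sup>2)) *\<^sub>R b) $ i) (s * t / sqrt (s\<^sup>2 + t\<^sup>2)) (x $ i)"
    using nd_mult[OF s t, of "a$i" "x$i" "b$i"] by (simp add: add_divide_distrib)
qed

lemma gv_conv:
  fixes a b :: "real^'k::finite"
  assumes s: "s > 0" and t: "t > 0"
  shows "(\<integral>\<^sup>+ x. ennreal (gauss_vec_density a s x) * ennreal (gauss_vec_density b t x) \<partial>lborel)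
       = ennreal (gauss_vec_density b (sqrt (s\<^sup>2 + t\<^sup>2)) a)"
proof -
  have r: "s * t / sqrt (s\<^sup>2 + t\<^sup>2) > 0" using s t by (simp add: add_pos_pos)
  have "(\<integral>\<^sup>+ x. ennreal (gauss_vec_density a s x) * ennreal (gauss_vec_density b t x) \<partial>lborel)
      = (\<integral>\<^sup>+ x. ennreal (gauss_vec_density b (sqrt (s\<^sup>2 + t\<^sup>2)) a) *
           ennreal (gauss_vec_density ((t\<^sup>2 / (s\<^sup>2 + t\<^sup>2)) *\<^sub>R a + (s\<^sup>2 / (s\<^sup>2 + t\<^sup>2)) *\<^sub>R b) (s * t / sqrt (s\<^sup>2 + t\<^sup>2)) x) \<partial>lborel)"
    by (simp add: ennreal_mult[symmetric] gv_mult[OF s t])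
  also have "\<dots> = ennreal (gauss_vec_density b (sqrt (s\<^sup>2 + t\<^sup>2)) a)"
    by (subst nn_integral_cmult) (auto simp: gauss_vec_integral[OF r])
  finally show ?thesis .
qed

lemma nd_prod:
  fixes a :: "'m \<Rightarrow> real"
  assumes S: "finite S" "S \<noteq> {}" and s: "s > 0"
  shows "\<exists>C>0. \<forall>x. (\<Prod>m\<in>S. normal_density (a m) s x) =
           C * normal_density ((\<Sum>m\<in>S. a m) / real (card S)) (s / sqrt (real (card S))) x"
proof -
  define k where "k = real (card S)"
  have k: "k > 0" using S by (simp add: k_def card_gt_0_iff)
  define A where "A = (\<Sum>m\<in>S. a m)"
  define B where "B = (\<Sum>m\<in>S. (a m)\<^sup>2)"
  define C where "C = (1 / sqrt (2 * pi * s\<^sup>2)) ^ card S / (1 / sqrt (2 * pi * (s / sqrt k)\<^sup>2))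
                       * exp (- (B - A\<^sup>2 / k) / (2 * s\<^sup>2))"
  have Cpos: "C > 0" unfolding C_def using s k by simp
  have "(\<Prod>m\<in>S. normal_density (a m) s x) = C * normal_density (A / k) (s / sqrt k) x" for x
  proof -
    have sum: "(\<Sum>m\<in>S. (x - a m)\<^sup>2) = k * x\<^sup>2 - 2 * x * A + B"
      by (simp add: power2_diff sum.distrib sum_subtractf sum_distrib_left[symmetric] A_def B_def k_def
          algebra_simps sum_distrib_right)
    have lhs: "(\<Prod>m\<in>S. normal_density (a m) s x) = (1 / sqrt (2 * pi * s\<^sup>2)) ^ card S * exp (- (k * x\<^sup>2 - 2 * x * A + B) / (2 * s\<^sup>2))"
      unfolding normal_density_def prod.distrib sum[symmetric] using S
      by (simp add: exp_sum[symmetric] sum_divide_distrib sum_negf)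
    have ex: "- (k * x\<^sup>2 - 2 * x * A + B) / (2 * s\<^sup>2) = - (x - A / k)\<^sup>2 / (2 * (s / sqrt k)\<^sup>2) + - (B - A\<^sup>2 / k) / (2 * s\<^sup>2)"
      using s k by (simp add: field_simps power2_eq_square power_divide)
    have "(\<Prod>m\<in>S. normal_density (a m) s x) = (1 / sqrt (2 * pi * s\<^sup>2)) ^ card S *
       (exp (- (x - A / k)\<^sup>2 / (2 * (s / sqrt k)\<^sup>2)) * exp (- (B - A\<^sup>2 / k) / (2 * s\<^sup>2)))"
      unfolding lhs ex exp_add ..
    also have "\<dots> = C * normal_density (A / k) (s / sqrt k) x"
      unfolding C_def normal_density_def using s k by (simp add: field_simps)
    finally show ?thesis .
  qed
  then show ?thesis using Cpos unfolding A_def k_def by blast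
qed

lemma gv_prod:
  fixes a :: "'m \<Rightarrow> real^'k::finite"
  assumes S: "finite S" "S \<noteq> {}" and s: "s > 0"
  shows "\<exists>C>0. \<forall>x. (\<Prod>m\<in>S. gauss_vec_density (a m) s x) =
           C * gauss_vec_density ((1 / real (card S)) *\<^sub>R (\<Sum>m\<in>S. a m)) (s / sqrt (real (card S))) x"
proof -
  have "\<forall>i. \<exists>C>0. \<forall>x. (\<Prod>m\<in>S. normal_density (a m $ i) s x) =
           C * normal_density ((\<Sum>m\<in>S. a m $ i) / real (card S)) (s / sqrt (real (card S))) x"
    by (intro allI nd_prod[OF S s])
  then obtain C where C: "\<And>i. C i > 0" "\<And>i x. (\<Prod>m\<in>S. normal_density (a m $ i) s x) =
           C i * normal_density ((\<Sum>m\<in>S. a m $ i) / real (card S)) (s / sqrt (real (card S))) x"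
    by metis
  have "(\<Prod>m\<in>S. gauss_vec_density (a m) s x) =
           (\<Prod>i\<in>UNIV. C i) * gauss_vec_density ((1 / real (card S)) *\<^sub>R (\<Sum>m\<in>S. a m)) (s / sqrt (real (card S))) x" for x
    unfolding gauss_vec_density_def
    by (subst prod.swap) (simp add: C(2) prod.distrib)
  moreover have "(\<Prod>i\<in>UNIV. C i) > 0" using C(1) by (simp add: prod_pos)
  ultimately show ?thesis by blast
qed


lemma sum_delta_mult: "(\<Sum>j\<in>(UNIV::'n::finite set). (if i = j then c else 0) * f j) = c * (f i::real)"
proof -
  have "(\<Sum>j\<in>(UNIV::'n set). (if i = j then c else 0) * f j) = (\<Sum>j\<in>UNIV. if i = j then c * f j else 0)"
    by (rule sum.cong) auto
  then show ?thesis by simp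
qed

lemma mat_vec_mult: "(mat c :: real^'n::finite^'n) *v x = c *\<^sub>R x"
  by (simp add: vec_eq_iff matrix_vector_mult_def mat_def sum_delta_mult)

lemma mat_mat_mult: "(mat a :: real^'n::finite^'n) ** mat b = mat (a * b)"
  by (simp add: vec_eq_iff matrix_matrix_mult_def mat_def sum_delta_mult)

lemma matrix_inv_mat:
  assumes "c \<noteq> (0::real)"
  shows "matrix_inv (mat c :: real^'n::finite^'n) = mat (inverse c)"
proof -
  have ex: "\<exists>A'::real^'n^'n. mat c ** A' = mat 1 \<and> A' ** mat c = mat 1"
    by (rule exI[of _ "mat (inverse c)"]) (simp add: mat_mat_mult assms)
  define A' where "A' = matrix_inv (mat c :: real^'n^'n)"
  have A': "mat c ** A' = mat 1 \<and> A' ** mat c = mat 1"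
    unfolding A'_def matrix_inv_def by (rule someI_ex[OF ex])
  have "A' = (mat (inverse c) ** mat c) ** A'"
    using assms by (simp add: mat_mat_mult matrix_mul_lid)
  also have "\<dots> = mat (inverse c) ** (mat c ** A')" by (simp add: matrix_mul_assoc)
  also have "\<dots> = mat (inverse c)" using A' by (simp add: matrix_mul_rid)
  finally show ?thesis unfolding A'_def .
qed

lemma inner_mat_adj: "(X *v u) \<bullet> y = u \<bullet> (transpose X *v (y::real^'m::finite))"
  for X :: "real^'n::finite^'m"
  by (metis dot_lmul_matrix inner_commute transpose_matrix_vector)

lemma local_est_eq:
  assumes "transpose X ** X = mat rho" "rho \<noteq> 0"
  shows "local_est X Y = (1 / rho) *\<^sub>R (transpose X *v Y)"
  unfolding local_est_def assms(1) matrix_inv_mat[OF assms(2)] mat_vec_mult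
  by (simp add: divide_inverse)

lemma resid_norm:
  fixes X :: "real^'d::finite^'b::finite"
  assumes XtX: "transpose X ** X = mat rho" and rho: "rho \<noteq> 0"
  shows "(norm (X *v w - Y))\<^sup>2 = rho * (norm (w - local_est X Y))\<^sup>2 + ((norm Y)\<^sup>2 - rho * (norm (local_est X Y))\<^sup>2)"
proof -
  define h where "h = local_est X Y"
  have th: "transpose X *v Y = rho *\<^sub>R h"
    unfolding h_def local_est_eq[OF XtX rho] using rho by simp
  have xx: "(X *v w) \<bullet> (X *v w) = rho * (w \<bullet> w)"
    unfolding inner_mat_adj matrix_vector_mul_assoc XtX mat_vec_mult by simp
  have xy: "(X *v w) \<bullet> Y = rho * (w \<bullet> h)"
    unfolding inner_mat_adj th by simp
  show ?thesis
    unfolding h_def[symmetric] power2_norm_eq_inner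
    by (simp add: inner_diff_left inner_diff_right xx xy inner_commute[of Y "X *v w"] inner_commute[of h w] algebra_simps)
qed

lemma likelihood:
  fixes X :: "real^'d::finite^'b::finite"
  assumes XtX: "transpose X ** X = mat rho" and rho: "rho > 0" and sig: "sig > 0"
  shows "\<exists>K>0. \<forall>u. gauss_vec_density (X *v u) sig Y = K * gauss_vec_density (local_est X Y) (sig / sqrt rho) u"
proof -
  define h where "h = local_est X Y"
  define E where "E = (norm Y)\<^sup>2 - rho * (norm h)\<^sup>2"
  define K where "K = (1 / sqrt (2 * pi * sig\<^sup>2)) ^ CARD('b) / (1 / sqrt (2 * pi * (sig / sqrt rho)\<^sup>2)) ^ CARD('d)
     * exp (- E / (2 * sig\<^sup>2))"
  have Kpos: "K > 0" unfolding K_def using rho sig by simp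
  have "gauss_vec_density (X *v u) sig Y = K * gauss_vec_density h (sig / sqrt rho) u" for u
  proof -
    have r: "(norm (Y - X *v u))\<^sup>2 = rho * (norm (u - h))\<^sup>2 + E"
      unfolding E_def h_def using resid_norm[OF XtX, of u Y] rho by (simp add: norm_minus_commute)
    have e: "- (norm (Y - X *v u))\<^sup>2 / (2 * sig\<^sup>2) = - (norm (u - h))\<^sup>2 / (2 * (sig / sqrt rho)\<^sup>2) + - E / (2 * sig\<^sup>2)"
      unfolding r using rho sig by (simp add: field_simps power_divide)
    show ?thesis
      unfolding gauss_vec_closed e exp_add K_def using rho sig by (simp add: field_simps)
  qed
  then show ?thesis using Kpos unfolding h_def by blast
qed

lemma stack_gram:
  fixes X :: "'c::finite \<Rightarrow> real^'d::finite^'b::finite"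
  assumes XtX: "\<And>m. transpose (X m) ** X m = mat rho"
  shows "transpose (stack_design X) ** stack_design X = mat (real CARD('c) * rho)"
proof -
  have "(transpose (stack_design X) ** stack_design X) $ i $ j = (mat (real CARD('c) * rho) :: real^'d^'d) $ i $ j" for i j
  proof -
    have "(transpose (stack_design X) ** stack_design X) $ i $ j
        = (\<Sum>p\<in>(UNIV::'c set) \<times> (UNIV::'b set). X (fst p) $ snd p $ i * X (fst p) $ snd p $ j)"
      by (simp add: matrix_matrix_mult_def transpose_def stack_design_def UNIV_Times_UNIV)
    also have "\<dots> = (\<Sum>m\<in>UNIV. \<Sum>r\<in>UNIV. X m $ r $ i * X m $ r $ j)"
      by (simp add: sum.cartesian_product case_prod_beta)
    also have "\<dots> = (\<Sum>m\<in>(UNIV::'c set). (transpose (X m) ** X m) $ i $ j)"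
      by (simp add: matrix_matrix_mult_def transpose_def)
    also have "\<dots> = (\<Sum>m\<in>(UNIV::'c set). (mat rho :: real^'d^'d) $ i $ j)"
      by (simp add: XtX)
    also have "\<dots> = (mat (real CARD('c) * rho) :: real^'d^'d) $ i $ j"
      by (simp add: mat_def)
    finally show ?thesis .
  qed
  then show ?thesis by (simp add: vec_eq_iff)
qed

lemma global_dp_eq:
  fixes X :: "'c::finite \<Rightarrow> real^'d::finite^'b::finite"
  assumes XtX: "\<And>m. transpose (X m) ** X m = mat rho" and rho: "rho > 0"
  shows "global_dp X Y z = (1 / real CARD('c)) *\<^sub>R (\<Sum>m\<in>UNIV. local_est (X m) (Y m) + z m)"
proof -
  have N: "real CARD('c) * rho \<noteq> 0" using rho by simp
  have c: "inverse (real CARD('c)) * inverse rho * rho = 1 / real CARD('c)" using rho by (simp add: divide_inverse)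
  show ?thesis
    unfolding global_dp_def stack_gram[OF XtX] matrix_inv_mat[OF N] XtX mat_vec_mult
    using rho by (simp add: scaleR_sum_right c)
qed


lemma norm_add_sq: "(norm (x + y))\<^sup>2 = (norm x)\<^sup>2 + 2 * (x \<bullet> y) + (norm (y::'a::real_inner))\<^sup>2"
  unfolding power2_norm_eq_inner by (simp add: inner_add_left inner_add_right inner_commute[of y x])

lemma quad_split:
  fixes h g w :: "'a::real_inner"
  assumes ac: "a + c \<noteq> 0"
  defines "W \<equiv> (a / (a + c)) *\<^sub>R h + (c / (a + c)) *\<^sub>R g"
  shows "a * (norm (w - h))\<^sup>2 + c * (norm (w - g))\<^sup>2 = (a + c) * (norm (w - W))\<^sup>2 + (a * (norm (W - h))\<^sup>2 + c * (norm (W - g))\<^sup>2)"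
proof -
  have aW: "(a + c) *\<^sub>R W = a *\<^sub>R h + c *\<^sub>R g"
    unfolding W_def using ac by (simp add: scaleR_add_right)
  have z: "a *\<^sub>R (W - h) + c *\<^sub>R (W - g) = 0"
    using aW by (simp add: algebra_simps)
  have e: "(norm (w - v))\<^sup>2 = (norm (w - W))\<^sup>2 + 2 * ((w - W) \<bullet> (W - v)) + (norm (W - v))\<^sup>2" for v
    using norm_add_sq[of "w - W" "W - v"] by simp
  have cross: "a * ((w - W) \<bullet> (W - h)) + c * ((w - W) \<bullet> (W - g)) = 0"
  proof -
    have "a * ((w - W) \<bullet> (W - h)) + c * ((w - W) \<bullet> (W - g)) = (w - W) \<bullet> (a *\<^sub>R (W - h) + c *\<^sub>R (W - g))"
      by (simp add: inner_add_right)
    then show ?thesis using z by simp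
  qed
  show ?thesis
    unfolding e[of h] e[of g] using cross by (simp add: algebra_simps)
qed

lemma part1:
  fixes X :: "'c::finite \<Rightarrow> real^'d::finite^'b::finite"
    and Y :: "'c \<Rightarrow> real^'b"
    and z :: "'c \<Rightarrow> real^'d"
    and rho lam :: real
    and n :: 'c
  assumes XtX: "\<And>m. transpose (X m) ** X m = mat rho"
    and rho_pos: "rho > 0"
    and lam: "0 \<le> lam" "lam \<le> 2"
  shows
    "(let N = real CARD('c); b = real CARD('b);
          uhat = (\<lambda>m. local_est (X m) (Y m));
          W = (b / ((2 - lam) * rho + b * lam)) *\<^sub>R
                ( ((2 - lam) * rho / b + lam / N) *\<^sub>R uhat n
                  + (lam / N) *\<^sub>R (\<Sum>m\<in>UNIV - {n}. uhat m)
                  + (lam / N) *\<^sub>R (\<Sum>m\<in>UNIV. z m)) in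
        (\<forall>w. pers_obj X Y z lam n W \<le> pers_obj X Y z lam n w) \<and>
        (\<forall>w. pers_obj X Y z lam n w \<le> pers_obj X Y z lam n W \<longrightarrow> w = W))"
proof -
  define N where "N = real CARD('c)"
  define b where "b = real CARD('b)"
  define uhat where "uhat = (\<lambda>m. local_est (X m) (Y m))"
  define h where "h = uhat n"
  define S1 where "S1 = (\<Sum>m\<in>UNIV - {n}. uhat m)"
  define S2 where "S2 = (\<Sum>m\<in>UNIV. z m)"
  define g where "g = global_dp X Y z"
  define D where "D = (2 - lam) * rho + b * lam"
  define a where "a = (1 - lam / 2) * rho / b"
  define c where "c = lam / 2"
  have N: "N > 0" unfolding N_def by simp
  have rne: "rho \<noteq> 0" using rho_pos by simp
  have b: "b > 0" unfolding b_def by simp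
  have D: "D > 0"
  proof (cases "lam = 2")
    case True then show ?thesis using b unfolding D_def by simp
  next
    case False
    then have "(2 - lam) * rho > 0" using lam rho_pos by simp
    moreover have "b * lam \<ge> 0" using b lam by simp
    ultimately show ?thesis unfolding D_def by linarith
  qed
  have ac: "a + c = D / (2 * b)" unfolding a_def c_def D_def using b by (simp add: field_simps)
  have acpos: "a + c > 0" using ac D b by simp
  have g: "g = (1 / N) *\<^sub>R (h + S1 + S2)"
  proof -
    have "(\<Sum>m\<in>UNIV. uhat m + z m) = h + S1 + S2"
      unfolding h_def S1_def S2_def sum.distrib by (simp add: sum.remove[of UNIV n])
    then show ?thesis unfolding g_def global_dp_eq[OF XtX rho_pos] N_def uhat_def by simp
  qed
  define W where "W = (b / D) *\<^sub>R (((2 - lam) * rho / b + lam / N) *\<^sub>R h + (lam / N) *\<^sub>R S1 + (lam / N) *\<^sub>R S2)"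
  have W: "W = (a / (a + c)) *\<^sub>R h + (c / (a + c)) *\<^sub>R g"
  proof -
    have q1: "a / (a + c) = (2 - lam) * rho / D"
      unfolding ac unfolding a_def using b D by (simp add: field_simps)
    have q2: "c / (a + c) = b * lam / D"
      unfolding ac unfolding c_def using b D by (simp add: field_simps)
    have c1: "a / (a + c) + c / (a + c) * (1 / N) = b / D * ((2 - lam) * rho / b + lam / N)"
      unfolding q1 q2 using b D N by (simp add: field_simps)
    have c2: "c / (a + c) * (1 / N) = b / D * (lam / N)"
      unfolding q2 using b D N by (simp add: field_simps)
    have "(a / (a + c)) *\<^sub>R h + (c / (a + c)) *\<^sub>R g
        = (a / (a + c) + c / (a + c) * (1 / N)) *\<^sub>R h + (c / (a + c) * (1 / N)) *\<^sub>R S1 + (c / (a + c) * (1 / N)) *\<^sub>R S2"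
      unfolding g by (simp add: scaleR_add_right scaleR_add_left)
    also have "\<dots> = W" unfolding W_def scaleR_add_right scaleR_scaleR c1[symmetric] c2[symmetric] ..
    finally show ?thesis by simp
  qed
  define K0 where "K0 = (1 - lam / 2) / b * ((norm (Y n))\<^sup>2 - rho * (norm h)\<^sup>2)"
  have obj: "pers_obj X Y z lam n w = a * (norm (w - h))\<^sup>2 + c * (norm (w - g))\<^sup>2 + K0" for w
    unfolding pers_obj_def local_loss_def num_samples_def resid_norm[OF XtX[of n] rne] g_def[symmetric]
      h_def uhat_def K0_def a_def c_def b_def[symmetric]
    using rho_pos b by (simp add: field_simps)
  define R where "R = a * (norm (W - h))\<^sup>2 + c * (norm (W - g))\<^sup>2 + K0"
  have obj2: "pers_obj X Y z lam n w = (a + c) * (norm (w - W))\<^sup>2 + R" for w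
    unfolding obj R_def W using quad_split[of a c w h g] acpos by simp
  have A: "\<forall>w. pers_obj X Y z lam n W \<le> pers_obj X Y z lam n w"
    using acpos by (simp add: obj2)
  have B: "\<forall>w. pers_obj X Y z lam n w \<le> pers_obj X Y z lam n W \<longrightarrow> w = W"
  proof (intro allI impI)
    fix w assume "pers_obj X Y z lam n w \<le> pers_obj X Y z lam n W"
    then have "(a + c) * (norm (w - W))\<^sup>2 \<le> 0" by (simp add: obj2)
    then have "(norm (w - W))\<^sup>2 \<le> 0" using acpos by (simp add: mult_le_0_iff)
    then show "w = W" by simp
  qed
  show ?thesis
    unfolding Let_def N_def[symmetric] b_def[symmetric] uhat_def[symmetric] h_def[symmetric]
      S1_def[symmetric] S2_def[symmetric] D_def[symmetric] W_def[symmetric]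
    using A B by simp
qed


lemma post_mass_reduce:
  fixes X :: "'c::finite \<Rightarrow> real^'d::finite^'b::finite"
    and Y :: "'c \<Rightarrow> real^'b"
    and n :: 'c
    and K :: "'c \<Rightarrow> real"
  assumes K: "\<And>m u. gauss_vec_density (X m *v u) sig (Y m) = K m * gauss_vec_density (local_est (X m) (Y m)) tau u"
    and Kpos: "\<And>m. K m > 0"
    and zeta: "zeta > 0" and tau: "tau > 0"
    and A[measurable]: "A \<in> sets borel"
  shows "post_mass zeta sig X Y n A = ennreal (\<Prod>m\<in>UNIV. K m) *
     (\<integral>\<^sup>+ v. indicator A v * ennreal (gauss_vec_density (local_est (X n) (Y n)) tau v) *
        (\<integral>\<^sup>+ w. ennreal (gauss_vec_density v zeta w) *
           ennreal (\<Prod>m\<in>UNIV - {n}. gauss_vec_density (local_est (X m) (Y m)) (sqrt (zeta\<^sup>2 + tau\<^sup>2)) w) \<partial>lborel) \<partial>lborel)"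
proof -
  define uh where "uh = (\<lambda>m. local_est (X m) (Y m))"
  define sq where "sq = sqrt (zeta\<^sup>2 + tau\<^sup>2)"
  define P where "P = (\<lambda>w. \<Prod>m\<in>UNIV - {n}. gauss_vec_density (uh m) sq w)"
  define p where "p = (\<lambda>w m v. gauss_vec_density w zeta v * gauss_vec_density (uh m) tau v)"
  define Kall where "Kall = (\<Prod>m\<in>UNIV. K m)"
  define IA where "IA = (\<lambda>w. \<integral>\<^sup>+ v. indicator A v * ennreal (p w n v) \<partial>lborel)"
  have pp[measurable]: "(\<lambda>x. p (fst x) m (snd x)) \<in> borel_measurable (lborel \<Otimes>\<^sub>M lborel)" for m
    unfolding p_def by measurable
  have pm[measurable]: "(\<lambda>x. p w m x) \<in> borel_measurable borel" for w m
    unfolding p_def by measurable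
  have Pm[measurable]: "P \<in> borel_measurable borel"
    unfolding P_def by measurable
  have joint: "joint_density zeta sig X Y w u = Kall * (\<Prod>m\<in>UNIV. p w m (u $ m))" for w u
    unfolding joint_density_def K p_def Kall_def uh_def prod.distrib[symmetric]
    by (intro prod.cong refl) (simp add: ac_simps)
  have inner: "(\<integral>\<^sup>+ u. indicator A (u $ n) * ennreal (joint_density zeta sig X Y w u) \<partial>lborel)
      = ennreal Kall * (IA w * ennreal (P w))" for w
  proof -
    define f where "f = (\<lambda>m v. (if m = n then indicator A v else 1) * ennreal (p w m v))"
    have [measurable]: "f m \<in> borel_measurable borel" for m
      unfolding f_def by measurable
    have "(\<lambda>u. indicator A (u $ n) * ennreal (joint_density zeta sig X Y w u)) =
          (\<lambda>u. ennreal Kall * (\<Prod>m\<in>UNIV. f m (u $ m)))"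
    proof
      fix u
      have Kn: "Kall \<ge> 0" unfolding Kall_def using Kpos by (simp add: prod_nonneg less_imp_le)
      have p0: "\<And>m v. p w m v \<ge> 0" by (simp add: p_def)
      show "indicator A (u $ n) * ennreal (joint_density zeta sig X Y w u) = ennreal Kall * (\<Prod>m\<in>UNIV. f m (u $ m))"
        unfolding joint f_def prod.distrib
        by (simp add: prod_ennreal p0 ennreal_mult Kn prod_nonneg mult_ac)
    qed
    then have "(\<integral>\<^sup>+ u. indicator A (u $ n) * ennreal (joint_density zeta sig X Y w u) \<partial>lborel)
       = ennreal Kall * (\<Prod>m\<in>UNIV. \<integral>\<^sup>+ v. f m v \<partial>lborel)"
      by (simp add: nn_integral_cmult nn_integral_vec_prod)
    also have "(\<Prod>m\<in>UNIV. \<integral>\<^sup>+ v. f m v \<partial>lborel) = (\<integral>\<^sup>+ v. f n v \<partial>lborel) * (\<Prod>m\<in>UNIV - {n}. \<integral>\<^sup>+ v. f m v \<partial>lborel)"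
      by (simp add: prod.remove[of UNIV n])
    also have "(\<Prod>m\<in>UNIV - {n}. \<integral>\<^sup>+ v. f m v \<partial>lborel) = ennreal (P w)"
    proof -
      have "(\<Prod>m\<in>UNIV - {n}. \<integral>\<^sup>+ v. f m v \<partial>lborel) = (\<Prod>m\<in>UNIV - {n}. ennreal (gauss_vec_density (uh m) sq w))"
      proof (rule prod.cong[OF refl])
        fix m assume "m \<in> UNIV - {n}"
        then have "f m = (\<lambda>v. ennreal (gauss_vec_density w zeta v) * ennreal (gauss_vec_density (uh m) tau v))"
          unfolding f_def p_def by (auto simp: ennreal_mult)
        then show "(\<integral>\<^sup>+ v. f m v \<partial>lborel) = ennreal (gauss_vec_density (uh m) sq w)"
          unfolding sq_def using gv_conv[OF zeta tau] by simp
      qed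
      then show ?thesis unfolding P_def by (simp add: prod_ennreal)
    qed
    finally show ?thesis unfolding IA_def f_def by simp
  qed
  define F where "F = (\<lambda>w v. indicator A v * ennreal (p w n v) * ennreal (P w))"
  have [measurable]: "case_prod F \<in> borel_measurable (lborel \<Otimes>\<^sub>M lborel)"
    unfolding F_def split_beta' by measurable
  have "post_mass zeta sig X Y n A = (\<integral>\<^sup>+ w. ennreal Kall * (IA w * ennreal (P w)) \<partial>lborel)"
    unfolding post_mass_def inner ..
  also have "\<dots> = ennreal Kall * (\<integral>\<^sup>+ w. IA w * ennreal (P w) \<partial>lborel)"
    by (rule nn_integral_cmult) (simp add: IA_def)
  also have "(\<integral>\<^sup>+ w. IA w * ennreal (P w) \<partial>lborel) = (\<integral>\<^sup>+ w. (\<integral>\<^sup>+ v. F w v \<partial>lborel) \<partial>lborel)"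
    unfolding IA_def F_def by (subst nn_integral_multc) auto
  also have "\<dots> = (\<integral>\<^sup>+ v. (\<integral>\<^sup>+ w. F w v \<partial>lborel) \<partial>lborel)"
    by (rule lborel_pair.Fubini'[symmetric]) simp
  also have "\<dots> = (\<integral>\<^sup>+ v. indicator A v * ennreal (gauss_vec_density (uh n) tau v) *
        (\<integral>\<^sup>+ w. ennreal (gauss_vec_density v zeta w) * ennreal (P w) \<partial>lborel) \<partial>lborel)"
  proof (rule nn_integral_cong)
    fix v :: "real^'d"
    have "(\<lambda>w. F w v) = (\<lambda>w. (indicator A v * ennreal (gauss_vec_density (uh n) tau v)) *
        (ennreal (gauss_vec_density v zeta w) * ennreal (P w)))"
      unfolding F_def p_def by (auto simp: ennreal_mult gauss_vec_sym[of _ zeta] mult_ac)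
    then show "(\<integral>\<^sup>+ w. F w v \<partial>lborel) = indicator A v * ennreal (gauss_vec_density (uh n) tau v) *
        (\<integral>\<^sup>+ w. ennreal (gauss_vec_density v zeta w) * ennreal (P w) \<partial>lborel)"
      by (simp add: nn_integral_cmult)
  qed
  finally show ?thesis unfolding Kall_def P_def uh_def sq_def .
qed


lemma part2:
  fixes X :: "'c::finite \<Rightarrow> real^'d::finite^'b::finite"
    and Y :: "'c \<Rightarrow> real^'b"
    and rho zeta sig :: real
    and n :: 'c
  assumes XtX: "\<And>m. transpose (X m) ** X m = mat rho"
    and rho_pos: "rho > 0"
    and zeta_pos: "zeta > 0"
    and sigma_pos: "sig > 0"
  shows
     "(let N = real CARD('c);
          uhat = (\<lambda>m. local_est (X m) (Y m));
          sw2 = inverse ((N - 1) / (sig\<^sup>2 / rho + N * zeta\<^sup>2) + rho / sig\<^sup>2);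
          mu = (sw2 * rho / sig\<^sup>2) *\<^sub>R uhat n
               + (sw2 * rho / (sig\<^sup>2 + N * zeta\<^sup>2 * rho)) *\<^sub>R (\<Sum>m\<in>UNIV - {n}. uhat m) in
        0 < post_mass zeta sig X Y n UNIV \<and> post_mass zeta sig X Y n UNIV < \<infinity> \<and>
        (\<forall>A \<in> sets borel.
           post_prob zeta sig X Y n A =
             (\<integral>\<^sup>+ v. indicator A v * ennreal (gauss_vec_density mu (sqrt sw2) v) \<partial>lborel)))"
proof -
  define N where "N = real CARD('c)"
  define uh where "uh = (\<lambda>m. local_est (X m) (Y m))"
  define sw2 where "sw2 = inverse ((N - 1) / (sig\<^sup>2 / rho + N * zeta\<^sup>2) + rho / sig\<^sup>2)"
  define mu where "mu = (sw2 * rho / sig\<^sup>2) *\<^sub>R uh n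
               + (sw2 * rho / (sig\<^sup>2 + N * zeta\<^sup>2 * rho)) *\<^sub>R (\<Sum>m\<in>UNIV - {n}. uh m)"
  define tau where "tau = sig / sqrt rho"
  define T where "T = sig\<^sup>2 / rho"
  have tau: "tau > 0" unfolding tau_def using rho_pos sigma_pos by simp
  have T: "T > 0" unfolding T_def using rho_pos sigma_pos by simp
  have tau2: "tau\<^sup>2 = T" unfolding tau_def T_def using rho_pos by (simp add: power_divide)
  have N1: "N \<ge> 1" unfolding N_def by (simp add: Suc_leI)
  have sw2pos: "sw2 > 0" unfolding sw2_def using N1 T_def T zeta_pos
    by (intro positive_imp_inverse_positive add_nonneg_pos divide_nonneg_nonneg)
       (auto intro!: add_pos_nonneg divide_pos_pos simp: rho_pos sigma_pos)
  have "\<forall>m. \<exists>K>0. \<forall>u. gauss_vec_density (X m *v u) sig (Y m) = K * gauss_vec_density (local_est (X m) (Y m)) tau u"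
    unfolding tau_def using likelihood[OF XtX rho_pos sigma_pos] by blast
  then obtain K where K: "\<And>m. K m > 0"
     "\<And>m u. gauss_vec_density (X m *v u) sig (Y m) = K m * gauss_vec_density (local_est (X m) (Y m)) tau u"
    by metis
  define Kall where "Kall = (\<Prod>m\<in>UNIV. K m)"
  have Kall: "Kall > 0" unfolding Kall_def using K(1) by (simp add: prod_pos)
  define sq where "sq = sqrt (zeta\<^sup>2 + tau\<^sup>2)"
  have sq: "sq > 0" unfolding sq_def using zeta_pos by (simp add: add_pos_nonneg)
  define Q where "Q = (\<lambda>v. \<integral>\<^sup>+ w. ennreal (gauss_vec_density v zeta w) *
           ennreal (\<Prod>m\<in>UNIV - {n}. gauss_vec_density (uh m) sq w) \<partial>lborel)"
  have red: "post_mass zeta sig X Y n A = ennreal Kall *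
     (\<integral>\<^sup>+ v. indicator A v * ennreal (gauss_vec_density (uh n) tau v) * Q v \<partial>lborel)"
    if "A \<in> sets borel" for A
    unfolding Kall_def Q_def uh_def sq_def
    by (rule post_mass_reduce[OF K(2) K(1) zeta_pos tau that])
  define Z where "Z = zeta\<^sup>2"
  have Z: "Z > 0" unfolding Z_def using zeta_pos by simp
  have TNZ: "T + N * Z > 0" using T Z N1 by (simp add: add_pos_pos)
  have NTZ: "N * T + N * Z > 0" using T Z N1 by (simp add: add_pos_pos)
  have NTZ': "N * (T + Z) > 0" using T Z N1 by (simp add: add_pos_pos)
  have sw2T: "sw2 = T * (T + N * Z) / (N * (T + Z))"
  proof -
    have "rho / sig\<^sup>2 = 1 / T" unfolding T_def by simp
    then have "sw2 = inverse ((N - 1) / (T + N * Z) + 1 / T)" unfolding sw2_def T_def[symmetric] Z_def by simp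
    then show ?thesis using T Z N1 TNZ by (simp add: field_simps add_pos_pos)
  qed
  have key: "\<exists>KK>0. \<forall>v. ennreal (gauss_vec_density (uh n) tau v) * Q v = ennreal (KK * gauss_vec_density mu (sqrt sw2) v)"
  proof (cases "CARD('c) = 1")
    case True
    then obtain x :: 'c where "UNIV = {x}" using card_1_singletonE by blast
    then have S: "UNIV - {n} = {}" by (metis Diff_cancel UNIV_I singletonD)
    have N: "N = 1" unfolding N_def using True by simp
    have Q1: "Q v = 1" for v
      unfolding Q_def S using gauss_vec_integral[OF zeta_pos, of v] by simp
    have sw: "sw2 = T" unfolding sw2T N using T Z by simp
    have sq: "sqrt sw2 = tau" unfolding sw using tau2 tau by (auto intro: real_sqrt_unique)
    have mu: "mu = uh n" unfolding mu_def S sw T_def using rho_pos sigma_pos by simp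
    show ?thesis unfolding Q1 sq mu by (intro exI[of _ 1]) simp
  next
    case False
    define S where "S = UNIV - {n}"
    have N2: "N \<ge> 2" using False N1 unfolding N_def by linarith
    have cS: "real (card S) = N - 1" unfolding S_def N_def by (simp add: card_Diff_singleton)
    define k where "k = N - 1"
    have k: "k > 0" unfolding k_def using N2 by simp
    have Sfin: "finite S" by simp
    have Sne: "S \<noteq> {}" using k cS unfolding k_def by auto
    define ub where "ub = (1 / real (card S)) *\<^sub>R (\<Sum>m\<in>S. uh m)"
    define s2 where "s2 = sq / sqrt (real (card S))"
    have s2: "s2 > 0" unfolding s2_def using sq Sne Sfin by (simp add: card_gt_0_iff)
    obtain C2 where C2: "C2 > 0" "\<And>w. (\<Prod>m\<in>S. gauss_vec_density (uh m) sq w) = C2 * gauss_vec_density ub s2 w"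
      using gv_prod[OF Sfin Sne sq, of uh] unfolding ub_def s2_def by blast
    define tt where "tt = sqrt (zeta\<^sup>2 + s2\<^sup>2)"
    have tt: "tt > 0" unfolding tt_def using zeta_pos by (simp add: add_pos_nonneg)
    have Qv: "Q v = ennreal C2 * ennreal (gauss_vec_density ub tt v)" for v
    proof -
      have "Q v = (\<integral>\<^sup>+ w. ennreal C2 * (ennreal (gauss_vec_density v zeta w) * ennreal (gauss_vec_density ub s2 w)) \<partial>lborel)"
        unfolding Q_def S_def[symmetric] C2(2) using C2(1) by (simp add: ennreal_mult mult_ac)
      also have "\<dots> = ennreal C2 * ennreal (gauss_vec_density ub tt v)"
        by (subst nn_integral_cmult) (auto simp: gv_conv[OF zeta_pos s2] tt_def)
      finally show ?thesis .
    qed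
    define r where "r = tau * tt / sqrt (tau\<^sup>2 + tt\<^sup>2)"
    define c where "c = (tt\<^sup>2 / (tau\<^sup>2 + tt\<^sup>2)) *\<^sub>R uh n + (tau\<^sup>2 / (tau\<^sup>2 + tt\<^sup>2)) *\<^sub>R ub"
    define KK where "KK = C2 * gauss_vec_density ub (sqrt (tau\<^sup>2 + tt\<^sup>2)) (uh n)"
    have KK: "KK > 0" unfolding KK_def using C2(1) tau by (simp add: gauss_vec_pos add_pos_nonneg)
    have tt2: "tt\<^sup>2 = (N * Z + T) / k"
    proof -
      have "s2\<^sup>2 = (Z + T) / k" unfolding s2_def sq_def Z_def tau2[symmetric] cS k_def
        using k unfolding k_def by (simp add: power_divide add_nonneg_nonneg)
      then show ?thesis unfolding tt_def Z_def[symmetric] using Z k unfolding k_def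
        by (simp add: field_simps add_pos_nonneg)
    qed
    have Ttt: "T + tt\<^sup>2 = N * (T + Z) / k" unfolding tt2 using k unfolding k_def by (simp add: field_simps)
    have r: "r = sqrt sw2"
    proof -
      have "r\<^sup>2 = T * tt\<^sup>2 / (T + tt\<^sup>2)" unfolding r_def tau2[symmetric]
        using tau tt by (simp add: power_divide power_mult_distrib add_pos_nonneg)
      also have "\<dots> = sw2" unfolding Ttt unfolding tt2 sw2T using k T Z N1 NTZ NTZ' TNZ by (simp add: divide_simps ac_simps)
      finally have "r\<^sup>2 = sw2" .
      moreover have "r \<ge> 0" unfolding r_def using tau tt by simp
      ultimately show ?thesis by (auto intro: real_sqrt_unique[symmetric])
    qed
    have c: "c = mu"
    proof -
      have e1: "tt\<^sup>2 / (tau\<^sup>2 + tt\<^sup>2) = sw2 * rho / sig\<^sup>2"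
      proof -
        have "sw2 * rho / sig\<^sup>2 = sw2 / T" unfolding T_def by simp
        then show ?thesis unfolding tau2 Ttt unfolding tt2 sw2T using k T Z N1 NTZ NTZ' TNZ by (simp add: divide_simps ac_simps)
      qed
      have e2: "tau\<^sup>2 / (tau\<^sup>2 + tt\<^sup>2) * (1 / real (card S)) = sw2 * rho / (sig\<^sup>2 + N * zeta\<^sup>2 * rho)"
      proof -
        have "sw2 * rho / (sig\<^sup>2 + N * zeta\<^sup>2 * rho) = sw2 / (T + N * Z)" unfolding T_def Z_def
          using rho_pos by (simp add: field_simps)
        then show ?thesis unfolding tau2 Ttt cS k_def[symmetric] sw2T using k T Z N1 NTZ NTZ' TNZ by (simp add: divide_simps ac_simps)
      qed
      show ?thesis unfolding c_def mu_def ub_def e1[symmetric] e2[symmetric] S_def by simp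
    qed
    have "ennreal (gauss_vec_density (uh n) tau v) * Q v = ennreal (KK * gauss_vec_density mu (sqrt sw2) v)" for v
    proof -
      have "ennreal (gauss_vec_density (uh n) tau v) * Q v = ennreal (C2 * (gauss_vec_density (uh n) tau v * gauss_vec_density ub tt v))"
        unfolding Qv using C2(1) by (simp add: ennreal_mult mult_ac)
      also have "\<dots> = ennreal (KK * gauss_vec_density mu (sqrt sw2) v)"
        unfolding gv_mult[OF tau tt] KK_def c[symmetric] r[symmetric] c_def r_def by (simp add: mult_ac)
      finally show ?thesis .
    qed
    then show ?thesis using KK by blast
  qed
  then obtain KK where KK: "KK > 0" "\<And>v. ennreal (gauss_vec_density (uh n) tau v) * Q v = ennreal (KK * gauss_vec_density mu (sqrt sw2) v)"
    by blast
  have pm: "post_mass zeta sig X Y n A = ennreal (Kall * KK) *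
     (\<integral>\<^sup>+ v. indicator A v * ennreal (gauss_vec_density mu (sqrt sw2) v) \<partial>lborel)"
    if A[measurable]: "A \<in> sets borel" for A
  proof -
    have "post_mass zeta sig X Y n A = ennreal Kall *
       (\<integral>\<^sup>+ v. ennreal KK * (indicator A v * ennreal (gauss_vec_density mu (sqrt sw2) v)) \<partial>lborel)"
      unfolding red[OF A] mult.assoc KK(2) using KK(1) by (simp add: ennreal_mult mult_ac)
    also have "\<dots> = ennreal Kall * (ennreal KK * (\<integral>\<^sup>+ v. indicator A v * ennreal (gauss_vec_density mu (sqrt sw2) v) \<partial>lborel))"
      by (subst nn_integral_cmult) auto
    finally show ?thesis using Kall KK(1) by (simp add: ennreal_mult mult_ac)
  qed
  have sqsw: "sqrt sw2 > 0" using sw2pos by simp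
  have U: "post_mass zeta sig X Y n UNIV = ennreal (Kall * KK)"
    using pm[of UNIV] gauss_vec_integral[OF sqsw, of mu] by simp
  have pos: "0 < post_mass zeta sig X Y n UNIV" unfolding U using Kall KK(1) by simp
  have fin: "post_mass zeta sig X Y n UNIV < \<infinity>" unfolding U by simp
  have prob: "post_prob zeta sig X Y n A =
             (\<integral>\<^sup>+ v. indicator A v * ennreal (gauss_vec_density mu (sqrt sw2) v) \<partial>lborel)"
    if "A \<in> sets borel" for A
    unfolding post_prob_def pm[OF that] U using Kall KK(1)
    by (subst mult.commute) (rule ennreal_mult_divide_eq, auto)
  show ?thesis
    unfolding Let_def N_def[symmetric] uh_def[symmetric] sw2_def[symmetric] mu_def[symmetric]
    using pos fin prob by blast
qed

theorem lemma3:
  fixes X :: "'c::finite \<Rightarrow> real^'d::finite^'b::finite"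
    and Y :: "'c \<Rightarrow> real^'b"
    and z :: "'c \<Rightarrow> real^'d"
    and rho zeta sig lam :: real
    and n :: 'c
  assumes XtX: "\<And>m. transpose (X m) ** X m = mat rho"
    and rho_pos: "rho > 0"
    and zeta_pos: "zeta > 0"
    and sigma_pos: "sig > 0"
    and lam: "0 \<le> lam" "lam \<le> 2"
  shows
    "(let N = real CARD('c); b = real CARD('b);
          uhat = (\<lambda>m. local_est (X m) (Y m));
          W = (b / ((2 - lam) * rho + b * lam)) *\<^sub>R
                ( ((2 - lam) * rho / b + lam / N) *\<^sub>R uhat n
                  + (lam / N) *\<^sub>R (\<Sum>m\<in>UNIV - {n}. uhat m)
                  + (lam / N) *\<^sub>R (\<Sum>m\<in>UNIV. z m)) in
        (\<forall>w. pers_obj X Y z lam n W \<le> pers_obj X Y z lam n w) \<and>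
        (\<forall>w. pers_obj X Y z lam n w \<le> pers_obj X Y z lam n W \<longrightarrow> w = W))
     \<and>
     (let N = real CARD('c);
          uhat = (\<lambda>m. local_est (X m) (Y m));
          sw2 = inverse ((N - 1) / (sig\<^sup>2 / rho + N * zeta\<^sup>2) + rho / sig\<^sup>2);
          mu = (sw2 * rho / sig\<^sup>2) *\<^sub>R uhat n
               + (sw2 * rho / (sig\<^sup>2 + N * zeta\<^sup>2 * rho)) *\<^sub>R (\<Sum>m\<in>UNIV - {n}. uhat m) in
        0 < post_mass zeta sig X Y n UNIV \<and> post_mass zeta sig X Y n UNIV < \<infinity> \<and>
        (\<forall>A \<in> sets borel.
           post_prob zeta sig X Y n A =
             (\<integral>\<^sup>+ v. indicator A v * ennreal (gauss_vec_density mu (sqrt sw2) v) \<partial>lborel)))"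
  by (rule conjI[OF part1[OF XtX rho_pos lam] part2[OF XtX rho_pos zeta_pos sigma_pos]])

end
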